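(* Let $(A,A^* )$ be a left-symmetric bialgebroid. Then for all $x\in\Gamma(A)$, $\xi\in\Gamma(A^* )$ and $f\in C^\infty(M)$, $$x\cdot_A d_*f=d_*\big(a_A(x)(f)\big)-(\delta_*x)\llcorner_{df},\qquad \xi\cdot_{A^*}df=d\big(a_{A^*}(\xi)(f)\big)-(\delta\xi)\llcorner_{d_*f}.$$
   Context: A left-symmetric algebroid is a vector bundle $A\to M$ with an $\mathbb R$-bilinear multiplication $\cdot_A$ on $\Gamma(A)$ with $x\cdot_A(y\cdot_Az)-(x\cdot_Ay)\cdot_Az$ symmetric in $x,y$, and an anchor $a_A:A\to TM$ with $x\cdot_A(fy)=f(x\cdot_Ay)+a_A(x)(f)y$, $(fx)\cdot_Ay=f(x\cdot_Ay)$; $[x,y]_A=x\cdot_Ay-y\cdot_Ax$; $d$ is the differential of the Lie algebroid $(A,[\cdot,\cdot]_A,a_A)$ ($\langle df,x\rangle=a_A(x)f$). The coboundary $\delta:C^n(A)\to C^{n+1}(A)$, $C^{n+1}(A)=\Gamma(\wedge^nA^*\otimes A^* )$, is $\delta\varphi(x_1,\dots,x_{n+1})=\sum_{i=1}^n(-1)^{i+1}a_A(x_i)\varphi(\dots,\hat{x_i},\dots,x_{n+1})-\sum_{i=1}^n(-1)^{i+1}\varphi(\dots,\hat{x_i},\dots,x_n,x_i\cdot_Ax_{n+1})+\sum_{i<j\le n}(-1)^{i+j}\varphi([x_i,x_j]_A,\dots,\hat{x_i},\dots,\hat{x_j},\dots,x_{n+1})$; in particular for $\xi\in\Gamma(A^*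 )$, $\delta\xi(x,y)=a_A(x)\langle\xi,y\rangle-\langle\xi,x\cdot_Ay\rangle$. The Lie derivative $\mathfrak L_x$ on $\Gamma(A\otimes A)$ is $\mathfrak L_x(y_1\otimes y_2)=(x\cdot_Ay_1)\otimes y_2+y_1\otimes[x,y_2]_A$. Given left-symmetric algebroids $(A,\cdot_A,a_A)$ and $(A^*,\cdot_{A^*},a_{A^*})$ on dual bundles, the dual-side objects $[\cdot,\cdot]_{A^*}$, $d_*$ (with values in $\Gamma(A)$, $\langle d_*f,\xi\rangle=a_{A^*}(\xi)f$), $\delta_*$ (acting on $\Gamma(\wedge^nA\otimes A)$) and $\mathfrak L_\xi$ (on $\Gamma(A^*\otimes A^* )$) are defined by the same formulas with the roles of $A$ and $A^*$ exchanged. The pair $(A,A^* )$ is a left-symmetric bialgebroid if for all $x,y\in\Gamma(A)$, $\xi,\eta\in\Gamma(A^* )$: $\delta[\xi,\eta]_{A^*}=\mathfrak L_\xi\delta\eta-\mathfrak L_\eta\delta\xi$ and $\delta_*[x,y]_A=\mathfrak L_x\delta_*y-\mathfrak L_y\delta_*x$. For $\Phi$ a section of $A\otimes A$ (resp. $A^*\otimes A^*$), $\Phi\llcorner_\alpha$ denotes contraction in the second slot: $(\Phi\llcorner_\alpha)(\beta)=\Phi(\beta,\alpha)$. *)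

theory Defs
  imports Main "HOL.Real_Vector_Spaces"
begin

text \<open>Algebraic (Serre--Swan) model of a pair of dual vector bundles over a manifold M:
  'r plays the role of C^infinity(M) (a commutative real algebra), 'a the module of
  sections of A, 'b the module of sections of A*, and P the duality pairing.
  Sections of A (x) A are represented as the C^infinity(M)-bilinear forms on
  sections of A*, and sections of A* (x) A* as bilinear forms on sections of A.
  Vector fields are the R-linear derivations of C^infinity(M).\<close>

definition is_module :: "('r::comm_ring_1 \<Rightarrow> 'a::ab_group_add \<Rightarrow> 'a) \<Rightarrow> bool" where
  "is_module sm \<longleftrightarrow>
     (\<forall>f g y. sm (f * g) y = sm f (sm g y)) \<and> (\<forall>y. sm 1 y = y) \<and>
     (\<forall>f g y. sm (f + g) y = sm f y + sm g y) \<and> (\<forall>f y z. sm f (y + z) = sm f y + sm f z)"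

text \<open>Duality pairing of finitely generated projective modules (sections of dual
  vector bundles): bilinear, with a finite dual basis in both directions.\<close>
definition dual_pair ::
  "('r::{comm_ring_1,real_algebra_1} \<Rightarrow> 'a::ab_group_add \<Rightarrow> 'a) \<Rightarrow> ('r \<Rightarrow> 'b::ab_group_add \<Rightarrow> 'b)
     \<Rightarrow> ('a \<Rightarrow> 'b \<Rightarrow> 'r) \<Rightarrow> bool" where
  "dual_pair smA smB P \<longleftrightarrow> is_module smA \<and> is_module smB \<and>
     (\<forall>f x \<xi>. P (smA f x) \<xi> = f * P x \<xi>) \<and> (\<forall>f x \<xi>. P x (smB f \<xi>) = f * P x \<xi>) \<and>
     (\<forall>x y \<xi>. P (x + y) \<xi> = P x \<xi> + P y \<xi>) \<and> (\<forall>x \<xi> \<eta>. P x (\<xi> + \<eta>) = P x \<xi> + P x \<eta>) \<and>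
     (\<exists>es :: ('a \<times> 'b) list.
        (\<forall>y. y = (\<Sum>(e,\<epsilon>)\<leftarrow>es. smA (P y \<epsilon>) e)) \<and>
        (\<forall>\<xi>. \<xi> = (\<Sum>(e,\<epsilon>)\<leftarrow>es. smB (P e \<xi>) \<epsilon>)))"

definition is_vector_field :: "('r::{comm_ring_1,real_algebra_1} \<Rightarrow> 'r) \<Rightarrow> bool" where
  "is_vector_field X \<longleftrightarrow>
     (\<forall>g h. X (g + h) = X g + X h) \<and> (\<forall>c g. X (of_real c * g) = of_real c * X g) \<and>
     (\<forall>g h. X (g * h) = g * X h + h * X g)"

definition brk :: "('a \<Rightarrow> 'a \<Rightarrow> 'a::ab_group_add) \<Rightarrow> 'a \<Rightarrow> 'a \<Rightarrow> 'a" where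
  "brk mul x y = mul x y - mul y x"

definition left_symmetric_algebroid ::
  "('r::{comm_ring_1,real_algebra_1} \<Rightarrow> 'a::ab_group_add \<Rightarrow> 'a) \<Rightarrow> ('a \<Rightarrow> 'a \<Rightarrow> 'a) \<Rightarrow> ('a \<Rightarrow> 'r \<Rightarrow> 'r) \<Rightarrow> bool" where
  "left_symmetric_algebroid sm mul an \<longleftrightarrow>
     (\<forall>x y z. mul (x + y) z = mul x z + mul y z) \<and>
     (\<forall>x y z. mul x (y + z) = mul x y + mul x z) \<and>
     (\<forall>c x y. mul (sm (of_real c) x) y = sm (of_real c) (mul x y)) \<and>
     (\<forall>c x y. mul x (sm (of_real c) y) = sm (of_real c) (mul x y)) \<and>
     (\<forall>x y z. mul x (mul y z) - mul (mul x y) z = mul y (mul x z) - mul (mul y x) z) \<and>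
     (\<forall>f x y. mul x (sm f y) = sm f (mul x y) + sm (an x f) y) \<and>
     (\<forall>f x y. mul (sm f x) y = sm f (mul x y)) \<and>
     (\<forall>x. is_vector_field (an x)) \<and>
     (\<forall>f x g. an (sm f x) g = f * an x g) \<and>
     (\<forall>x y g. an (x + y) g = an x g + an y g)"

definition diff :: "('e \<Rightarrow> 'f \<Rightarrow> 'r) \<Rightarrow> ('e \<Rightarrow> 'r \<Rightarrow> 'r) \<Rightarrow> 'r \<Rightarrow> 'f" where
  "diff P an f = (THE \<xi>. \<forall>x. P x \<xi> = an x f)"

definition cob1 :: "('e \<Rightarrow> 'f \<Rightarrow> 'r::comm_ring_1) \<Rightarrow> ('e \<Rightarrow> 'e \<Rightarrow> 'e) \<Rightarrow> ('e \<Rightarrow> 'r \<Rightarrow> 'r) \<Rightarrow> 'f \<Rightarrow> 'e \<Rightarrow> 'e \<Rightarrow> 'r" where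
  "cob1 P mul an \<xi> = (\<lambda>x y. an x (P y \<xi>) - P (mul x y) \<xi>)"

definition contr :: "('e \<Rightarrow> 'f \<Rightarrow> 'r) \<Rightarrow> ('e \<Rightarrow> 'e \<Rightarrow> 'r) \<Rightarrow> 'e \<Rightarrow> 'f" where
  "contr P \<Phi> \<alpha> = (THE \<xi>. \<forall>\<beta>. P \<beta> \<xi> = \<Phi> \<beta> \<alpha>)"

text \<open>Finite sum of decomposable tensors y1 (x) y2 in sections of E (x) E,
  as a bilinear form on sections of E*.\<close>
definition tsum :: "('e \<Rightarrow> 'f \<Rightarrow> 'r::comm_ring_1) \<Rightarrow> ('e \<times> 'e) list \<Rightarrow> 'f \<Rightarrow> 'f \<Rightarrow> 'r" where
  "tsum P ys = (\<lambda>\<xi> \<eta>. \<Sum>(y1,y2)\<leftarrow>ys. P y1 \<xi> * P y2 \<eta>)"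

definition lie :: "('e \<Rightarrow> 'f \<Rightarrow> 'r::comm_ring_1) \<Rightarrow> ('e \<Rightarrow> 'e \<Rightarrow> 'e::ab_group_add) \<Rightarrow> 'e
     \<Rightarrow> ('f \<Rightarrow> 'f \<Rightarrow> 'r) \<Rightarrow> 'f \<Rightarrow> 'f \<Rightarrow> 'r" where
  "lie P mul x \<Phi> = (THE \<Psi>. \<forall>ys. \<Phi> = tsum P ys \<longrightarrow>
      \<Psi> = tsum P (map (\<lambda>(y1,y2). (mul x y1, y2)) ys @ map (\<lambda>(y1,y2). (y1, brk mul x y2)) ys))"

definition flipP :: "('a \<Rightarrow> 'b \<Rightarrow> 'r) \<Rightarrow> 'b \<Rightarrow> 'a \<Rightarrow> 'r" where
  "flipP P = (\<lambda>\<xi> x. P x \<xi>)"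

definition left_symmetric_bialgebroid ::
  "('r::{comm_ring_1,real_algebra_1} \<Rightarrow> 'a::ab_group_add \<Rightarrow> 'a) \<Rightarrow> ('r \<Rightarrow> 'b::ab_group_add \<Rightarrow> 'b)
    \<Rightarrow> ('a \<Rightarrow> 'b \<Rightarrow> 'r) \<Rightarrow> ('a \<Rightarrow> 'a \<Rightarrow> 'a) \<Rightarrow> ('a \<Rightarrow> 'r \<Rightarrow> 'r)
    \<Rightarrow> ('b \<Rightarrow> 'b \<Rightarrow> 'b) \<Rightarrow> ('b \<Rightarrow> 'r \<Rightarrow> 'r) \<Rightarrow> bool" where
  "left_symmetric_bialgebroid smA smB P mulA anA mulB anB \<longleftrightarrow>
     dual_pair smA smB P \<and>
     left_symmetric_algebroid smA mulA anA \<and>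
     left_symmetric_algebroid smB mulB anB \<and>
     (\<forall>\<xi> \<eta>. cob1 P mulA anA (brk mulB \<xi> \<eta>) =
        lie (flipP P) mulB \<xi> (cob1 P mulA anA \<eta>) - lie (flipP P) mulB \<eta> (cob1 P mulA anA \<xi>)) \<and>
     (\<forall>x y. cob1 (flipP P) mulB anB (brk mulA x y) =
        lie P mulA x (cob1 (flipP P) mulB anB y) - lie P mulA y (cob1 (flipP P) mulB anB x))"

end

theory Submission
  imports Defs
begin


lemma additive_sum_list:
  fixes g :: "'x::ab_group_add \<Rightarrow> 'y::ab_group_add"
  assumes "\<And>a b. g (a + b) = g a + g b"
  shows "g (sum_list (map h xs)) = sum_list (map (\<lambda>x. g (h x)) xs)"
proof -
  have z: "g 0 = 0" using assms[of 0 0] by simp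
  show ?thesis by (induct xs) (simp_all add: z assms)
qed

lemma sum_list_concat': "sum_list (concat xss) = sum_list (map sum_list (xss::'x::monoid_add list list))"
  by (induct xss) simp_all

locale LSB =
  fixes sA :: "'r::{comm_ring_1,real_algebra_1} \<Rightarrow> 'a::ab_group_add \<Rightarrow> 'a"
    and sB :: "'r \<Rightarrow> 'b::ab_group_add \<Rightarrow> 'b"
    and P :: "'a \<Rightarrow> 'b \<Rightarrow> 'r"
    and mA :: "'a \<Rightarrow> 'a \<Rightarrow> 'a" and aA :: "'a \<Rightarrow> 'r \<Rightarrow> 'r"
    and mB :: "'b \<Rightarrow> 'b \<Rightarrow> 'b" and aB :: "'b \<Rightarrow> 'r \<Rightarrow> 'r"
    and es :: "('a \<times> 'b) list"
  assumes bi: "left_symmetric_bialgebroid sA sB P mA aA mB aB"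
    and esA: "\<And>y. y = (\<Sum>(e,\<epsilon>)\<leftarrow>es. sA (P y \<epsilon>) e)"
    and esB: "\<And>\<xi>. \<xi> = (\<Sum>(e,\<epsilon>)\<leftarrow>es. sB (P e \<xi>) \<epsilon>)"
begin

lemma dp: "dual_pair sA sB P" using bi unfolding left_symmetric_bialgebroid_def by blast
lemma lA: "left_symmetric_algebroid sA mA aA" using bi unfolding left_symmetric_bialgebroid_def by blast
lemma lB: "left_symmetric_algebroid sB mB aB" using bi unfolding left_symmetric_bialgebroid_def by blast
lemma comp: "cob1 (flipP P) mB aB (brk mA x y) =
        lie P mA x (cob1 (flipP P) mB aB y) - lie P mA y (cob1 (flipP P) mB aB x)"
  using bi unfolding left_symmetric_bialgebroid_def by blast

lemma modA: "is_module sA" using dp unfolding dual_pair_def by blast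
lemma modB: "is_module sB" using dp unfolding dual_pair_def by blast
lemma P_sA[simp]: "P (sA f x) \<xi> = f * P x \<xi>" using dp unfolding dual_pair_def by blast
lemma P_sB[simp]: "P x (sB f \<xi>) = f * P x \<xi>" using dp unfolding dual_pair_def by blast
lemma P_addL[simp]: "P (x + y) \<xi> = P x \<xi> + P y \<xi>" using dp unfolding dual_pair_def by blast
lemma P_addR[simp]: "P x (\<xi> + \<eta>) = P x \<xi> + P x \<eta>" using dp unfolding dual_pair_def by blast
lemma P_diffL[simp]: "P (x - y) \<xi> = P x \<xi> - P y \<xi>"
  using P_addL[of "x - y" y \<xi>] by (simp add: algebra_simps)
lemma P_diffR[simp]: "P x (\<xi> - \<eta>) = P x \<xi> - P x \<eta>"
  using P_addR[of x "\<xi> - \<eta>" \<eta>] by (simp add: algebra_simps)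

lemma sA_add: "sA f (y + z) = sA f y + sA f z" using modA unfolding is_module_def by blast
lemma sA_diff: "sA f (y - z) = sA f y - sA f z"
  using sA_add[of f "y - z" z] by (simp add: algebra_simps)

lemma mA_addL: "mA (x + y) z = mA x z + mA y z" using lA[unfolded left_symmetric_algebroid_def, THEN conjunct1] by blast
lemma mA_addR: "mA x (y + z) = mA x y + mA x z" using lA[unfolded left_symmetric_algebroid_def, THEN conjunct2, THEN conjunct1] by blast
lemma mA_Leib: "mA x (sA f y) = sA f (mA x y) + sA (aA x f) y" using lA unfolding left_symmetric_algebroid_def by blast
lemma mA_smL: "mA (sA f x) y = sA f (mA x y)" using lA unfolding left_symmetric_algebroid_def by blast
lemma aA_sm: "aA (sA f x) g = f * aA x g" using lA unfolding left_symmetric_algebroid_def by blast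
lemma aA_addL: "aA (x + y) g = aA x g + aA y g" using lA unfolding left_symmetric_algebroid_def by blast
lemma vfA: "is_vector_field (aA x)" using lA unfolding left_symmetric_algebroid_def by blast
lemma aA_add: "aA x (g + h) = aA x g + aA x h" using vfA unfolding is_vector_field_def by blast
lemma aA_mult: "aA x (g * h) = g * aA x h + h * aA x g" using vfA unfolding is_vector_field_def by blast
lemma aA_diff: "aA x (g - h) = aA x g - aA x h" using aA_add[of x "g - h" h] by (simp add: algebra_simps)

lemma mB_addL: "mB (x + y) z = mB x z + mB y z" using lB[unfolded left_symmetric_algebroid_def, THEN conjunct1] by blast
lemma mB_addR: "mB x (y + z) = mB x y + mB x z" using lB[unfolded left_symmetric_algebroid_def, THEN conjunct2, THEN conjunct1] by blast
lemma mB_Leib: "mB x (sB f y) = sB f (mB x y) + sB (aB x f) y" using lB unfolding left_symmetric_algebroid_def by blast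
lemma mB_smL: "mB (sB f x) y = sB f (mB x y)" using lB unfolding left_symmetric_algebroid_def by blast
lemma aB_sm: "aB (sB f x) g = f * aB x g" using lB unfolding left_symmetric_algebroid_def by blast
lemma aB_addL: "aB (x + y) g = aB x g + aB y g" using lB unfolding left_symmetric_algebroid_def by blast
lemma vfB: "is_vector_field (aB x)" using lB unfolding left_symmetric_algebroid_def by blast
lemma aB_add: "aB x (g + h) = aB x g + aB x h" using vfB unfolding is_vector_field_def by blast
lemma aB_mult: "aB x (g * h) = g * aB x h + h * aB x g" using vfB unfolding is_vector_field_def by blast
lemma aB_diff: "aB x (g - h) = aB x g - aB x h" using aB_add[of x "g - h" h] by (simp add: algebra_simps)

lemma linA_rep:
  assumes add: "\<And>a b. L (a + b) = L a + L b" and sm: "\<And>h a. L (sA h a) = h * L a"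
  shows "L z = (\<Sum>(e,\<epsilon>)\<leftarrow>es. P z \<epsilon> * L e)"
proof -
  have "L z = L (\<Sum>(e,\<epsilon>)\<leftarrow>es. sA (P z \<epsilon>) e)" using arg_cong[OF esA[of z], of L] .
  also have "\<dots> = (\<Sum>p\<leftarrow>es. L ((\<lambda>(e,\<epsilon>). sA (P z \<epsilon>) e) p))"
    by (rule additive_sum_list, rule add)
  also have "\<dots> = (\<Sum>(e,\<epsilon>)\<leftarrow>es. P z \<epsilon> * L e)"
    by (rule arg_cong[where f=sum_list], rule map_cong) (auto simp: sm)
  finally show ?thesis .
qed

lemma linB_rep:
  assumes add: "\<And>a b. L (a + b) = L a + L b" and sm: "\<And>h a. L (sB h a) = h * L a"
  shows "L z = (\<Sum>(e,\<epsilon>)\<leftarrow>es. P e z * L \<epsilon>)"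
proof -
  have "L z = L (\<Sum>(e,\<epsilon>)\<leftarrow>es. sB (P e z) \<epsilon>)" using arg_cong[OF esB[of z], of L] .
  also have "\<dots> = (\<Sum>p\<leftarrow>es. L ((\<lambda>(e,\<epsilon>). sB (P e z) \<epsilon>) p))"
    by (rule additive_sum_list, rule add)
  also have "\<dots> = (\<Sum>(e,\<epsilon>)\<leftarrow>es. P e z * L \<epsilon>)"
    by (rule arg_cong[where f=sum_list], rule map_cong) (auto simp: sm)
  finally show ?thesis .
qed

definition repB :: "('a \<Rightarrow> 'r) \<Rightarrow> 'b" where
  "repB L = (\<Sum>(e,\<epsilon>)\<leftarrow>es. sB (L e) \<epsilon>)"
definition repA :: "('b \<Rightarrow> 'r) \<Rightarrow> 'a" where
  "repA L = (\<Sum>(e,\<epsilon>)\<leftarrow>es. sA (L \<epsilon>) e)"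

lemma repB_char:
  assumes add: "\<And>a b. L (a + b) = L a + L b" and sm: "\<And>h a. L (sA h a) = h * L a"
  shows "P z (repB L) = L z"
proof -
  have "P z (repB L) = (\<Sum>p\<leftarrow>es. P z ((\<lambda>(e,\<epsilon>). sB (L e) \<epsilon>) p))"
    unfolding repB_def by (rule additive_sum_list) simp
  also have "\<dots> = (\<Sum>(e,\<epsilon>)\<leftarrow>es. P z \<epsilon> * L e)"
    by (rule arg_cong[where f=sum_list], rule map_cong) (auto simp: mult.commute)
  also have "\<dots> = L z" by (rule linA_rep[OF add sm, symmetric])
  finally show ?thesis .
qed

lemma repA_char:
  assumes add: "\<And>a b. L (a + b) = L a + L b" and sm: "\<And>h a. L (sB h a) = h * L a"
  shows "P (repA L) z = L z"
proof -
  have "P (repA L) z = (\<Sum>p\<leftarrow>es. (\<lambda>y. P y z) ((\<lambda>(e,\<epsilon>). sA (L \<epsilon>) e) p))"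
    unfolding repA_def by (rule additive_sum_list) simp
  also have "\<dots> = (\<Sum>(e,\<epsilon>)\<leftarrow>es. P e z * L \<epsilon>)"
    by (rule arg_cong[where f=sum_list], rule map_cong) (auto simp: mult.commute)
  also have "\<dots> = L z" by (rule linB_rep[OF add sm, symmetric])
  finally show ?thesis .
qed

lemma nondegA: assumes "\<And>\<eta>. P x \<eta> = P y \<eta>" shows "x = y"
proof -
  have "x = (\<Sum>(e,\<epsilon>)\<leftarrow>es. sA (P x \<epsilon>) e)" by (rule esA)
  also have "\<dots> = (\<Sum>(e,\<epsilon>)\<leftarrow>es. sA (P y \<epsilon>) e)" using assms by simp
  also have "\<dots> = y" by (rule esA[symmetric])
  finally show ?thesis .
qed
lemma nondegB: assumes "\<And>z. P z \<xi> = P z \<eta>" shows "\<xi> = \<eta>"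
proof -
  have "\<xi> = (\<Sum>(e,\<epsilon>)\<leftarrow>es. sB (P e \<xi>) \<epsilon>)" by (rule esB)
  also have "\<dots> = (\<Sum>(e,\<epsilon>)\<leftarrow>es. sB (P e \<eta>) \<epsilon>)" using assms by simp
  also have "\<dots> = \<eta>" by (rule esB[symmetric])
  finally show ?thesis .
qed

end


context LSB begin

lemma aA_zero: "aA x 0 = 0" using aA_add[of x 0 0] by simp
lemma aB_zero: "aB x 0 = 0" using aB_add[of x 0 0] by simp

lemma dA_char: "P z (diff P aA f) = aA z f"
proof -
  have ch: "P z (repB (\<lambda>z. aA z f)) = aA z f" for z
    by (rule repB_char) (simp_all add: aA_addL aA_sm)
  have "diff P aA f = repB (\<lambda>z. aA z f)" unfolding diff_def
  proof (rule the_equality)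
    show "\<forall>x. P x (repB (\<lambda>z. aA z f)) = aA x f" using ch by simp
    show "\<xi> = repB (\<lambda>z. aA z f)" if "\<forall>x. P x \<xi> = aA x f" for \<xi>
      using that ch by (intro nondegB) simp
  qed
  then show ?thesis using ch by simp
qed

lemma dB_char: "P (diff (flipP P) aB f) \<xi> = aB \<xi> f"
proof -
  have ch: "P (repA (\<lambda>z. aB z f)) \<xi> = aB \<xi> f" for \<xi>
    by (rule repA_char) (simp_all add: aB_addL aB_sm)
  have "diff (flipP P) aB f = repA (\<lambda>z. aB z f)" unfolding diff_def flipP_def
  proof (rule the_equality)
    show "\<forall>x. P (repA (\<lambda>z. aB z f)) x = aB x f" using ch by simp
    show "y = repA (\<lambda>z. aB z f)" if "\<forall>x. P y x = aB x f" for y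
      using that ch by (intro nondegA) simp
  qed
  then show ?thesis using ch by simp
qed

lemma contrB_char:
  assumes add: "\<And>a b. \<Phi> (a + b) \<alpha> = \<Phi> a \<alpha> + \<Phi> b \<alpha>" and sm: "\<And>h a. \<Phi> (sB h a) \<alpha> = h * \<Phi> a \<alpha>"
  shows "P (contr (flipP P) \<Phi> \<alpha>) \<beta> = \<Phi> \<beta> \<alpha>"
proof -
  have ch: "P (repA (\<lambda>z. \<Phi> z \<alpha>)) \<xi> = \<Phi> \<xi> \<alpha>" for \<xi>
    by (rule repA_char) (simp_all add: add sm)
  have "contr (flipP P) \<Phi> \<alpha> = repA (\<lambda>z. \<Phi> z \<alpha>)" unfolding contr_def flipP_def
  proof (rule the_equality)
    show "\<forall>x. P (repA (\<lambda>z. \<Phi> z \<alpha>)) x = \<Phi> x \<alpha>" using ch by simp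
    show "y = repA (\<lambda>z. \<Phi> z \<alpha>)" if "\<forall>x. P y x = \<Phi> x \<alpha>" for y
      using that ch by (intro nondegA) simp
  qed
  then show ?thesis using ch by simp
qed

lemma contrA_char:
  assumes add: "\<And>a b. \<Phi> (a + b) \<alpha> = \<Phi> a \<alpha> + \<Phi> b \<alpha>" and sm: "\<And>h a. \<Phi> (sA h a) \<alpha> = h * \<Phi> a \<alpha>"
  shows "P \<beta> (contr P \<Phi> \<alpha>) = \<Phi> \<beta> \<alpha>"
proof -
  have ch: "P z (repB (\<lambda>z. \<Phi> z \<alpha>)) = \<Phi> z \<alpha>" for z
    by (rule repB_char) (simp_all add: add sm)
  have "contr P \<Phi> \<alpha> = repB (\<lambda>z. \<Phi> z \<alpha>)" unfolding contr_def
  proof (rule the_equality)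
    show "\<forall>x. P x (repB (\<lambda>z. \<Phi> z \<alpha>)) = \<Phi> x \<alpha>" using ch by simp
    show "\<xi> = repB (\<lambda>z. \<Phi> z \<alpha>)" if "\<forall>x. P x \<xi> = \<Phi> x \<alpha>" for \<xi>
      using that ch by (intro nondegB) simp
  qed
  then show ?thesis using ch by simp
qed

lemma C_app: "cob1 (flipP P) mB aB y \<xi> \<eta> = aB \<xi> (P y \<eta>) - P y (mB \<xi> \<eta>)"
  by (simp add: cob1_def flipP_def)
lemma C_addL: "cob1 (flipP P) mB aB y (a + b) \<eta> = cob1 (flipP P) mB aB y a \<eta> + cob1 (flipP P) mB aB y b \<eta>"
  by (simp add: C_app aB_addL mB_addL algebra_simps)
lemma C_smL: "cob1 (flipP P) mB aB y (sB h a) \<eta> = h * cob1 (flipP P) mB aB y a \<eta>"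
  by (simp add: C_app aB_sm mB_smL algebra_simps)
lemma C_addR: "cob1 (flipP P) mB aB y \<xi> (a + b) = cob1 (flipP P) mB aB y \<xi> a + cob1 (flipP P) mB aB y \<xi> b"
  by (simp add: C_app aB_add mB_addR algebra_simps)
lemma C_smR: "cob1 (flipP P) mB aB y \<xi> (sB h a) = h * cob1 (flipP P) mB aB y \<xi> a"
  by (simp add: C_app aB_mult mB_Leib algebra_simps)
lemma C_addY: "cob1 (flipP P) mB aB (a + b) \<xi> \<eta> = cob1 (flipP P) mB aB a \<xi> \<eta> + cob1 (flipP P) mB aB b \<xi> \<eta>"
  by (simp add: C_app aB_add algebra_simps)
lemma C_smY: "cob1 (flipP P) mB aB (sA h a) \<xi> \<eta> = h * cob1 (flipP P) mB aB a \<xi> \<eta> + aB \<xi> h * P a \<eta>"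
  by (simp add: C_app aB_mult algebra_simps)

definition actL :: "'a \<Rightarrow> 'b \<Rightarrow> 'b" where
  "actL x \<xi> = repB (\<lambda>z. aA x (P z \<xi>) - P (mA x z) \<xi>)"
definition adL :: "'a \<Rightarrow> 'b \<Rightarrow> 'b" where
  "adL x \<eta> = repB (\<lambda>z. aA x (P z \<eta>) - P (brk mA x z) \<eta>)"

lemma actL_char: "P z (actL x \<xi>) = aA x (P z \<xi>) - P (mA x z) \<xi>"
  unfolding actL_def
  by (rule repB_char) (simp_all add: aA_add aA_mult mA_addR mA_Leib algebra_simps)

lemma brk_add: "brk mA x (a + b) = brk mA x a + brk mA x b"
  by (simp add: brk_def mA_addR mA_addL algebra_simps)
lemma brk_sm: "brk mA x (sA h z) = sA h (brk mA x z) + sA (aA x h) z"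
  by (simp add: brk_def mA_Leib mA_smL sA_diff algebra_simps)

lemma adL_char: "P z (adL x \<eta>) = aA x (P z \<eta>) - P (brk mA x z) \<eta>"
  unfolding adL_def
  by (rule repB_char) (simp_all add: aA_add aA_mult brk_add brk_sm algebra_simps)

lemma tsumT: "tsum P (map (\<lambda>(y1,y2). (mA x y1, y2)) ys @ map (\<lambda>(y1,y2). (y1, brk mA x y2)) ys) \<xi> \<eta>
   = aA x (tsum P ys \<xi> \<eta>) - tsum P ys (actL x \<xi>) \<eta> - tsum P ys \<xi> (adL x \<eta>)"
  by (induct ys) (auto simp: tsum_def actL_char adL_char aA_add aA_mult aA_zero algebra_simps)

end


context LSB begin

lemma tsum_rep:
  assumes aL: "\<And>a b \<eta>. \<Phi> (a + b) \<eta> = \<Phi> a \<eta> + \<Phi> b \<eta>" and sL: "\<And>h a \<eta>. \<Phi> (sB h a) \<eta> = h * \<Phi> a \<eta>"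
    and aR: "\<And>a b \<xi>. \<Phi> \<xi> (a + b) = \<Phi> \<xi> a + \<Phi> \<xi> b" and sR: "\<And>h a \<xi>. \<Phi> \<xi> (sB h a) = h * \<Phi> \<xi> a"
  shows "\<Phi> = tsum P (concat (map (\<lambda>(e,\<epsilon>). map (\<lambda>(e',\<epsilon>'). (sA (\<Phi> \<epsilon> \<epsilon>') e, e')) es) es))"
proof (rule ext, rule ext)
  fix \<xi> \<eta>
  have 1: "\<Phi> \<xi> \<eta> = (\<Sum>(e,\<epsilon>)\<leftarrow>es. P e \<xi> * \<Phi> \<epsilon> \<eta>)"
    using linB_rep[of "\<lambda>\<xi>. \<Phi> \<xi> \<eta>" \<xi>, OF aL sL] .
  have 2: "\<Phi> \<epsilon> \<eta> = (\<Sum>(e',\<epsilon>')\<leftarrow>es. P e' \<eta> * \<Phi> \<epsilon> \<epsilon>')" for \<epsilon>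
    using linB_rep[of "\<Phi> \<epsilon>" \<eta>, OF aR sR] .
  have 3: "tsum P (concat (map (\<lambda>(e,\<epsilon>). map (\<lambda>(e',\<epsilon>'). (sA (\<Phi> \<epsilon> \<epsilon>') e, e')) es) es)) \<xi> \<eta>
      = (\<Sum>(e,\<epsilon>)\<leftarrow>es. P e \<xi> * (\<Sum>(e',\<epsilon>')\<leftarrow>es. P e' \<eta> * \<Phi> \<epsilon> \<epsilon>'))"
    unfolding tsum_def
    by (simp add: map_concat sum_list_concat' o_def split_def sum_list_const_mult[symmetric] mult_ac)
  have "\<Phi> \<xi> \<eta> = (\<Sum>(e,\<epsilon>)\<leftarrow>es. P e \<xi> * (\<Sum>(e',\<epsilon>')\<leftarrow>es. P e' \<eta> * \<Phi> \<epsilon> \<epsilon>'))"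
    unfolding 1 by (rule arg_cong[where f=sum_list], rule map_cong) (auto simp: 2[symmetric])
  then show "\<Phi> \<xi> \<eta> = tsum P (concat (map (\<lambda>(e,\<epsilon>). map (\<lambda>(e',\<epsilon>'). (sA (\<Phi> \<epsilon> \<epsilon>') e, e')) es) es)) \<xi> \<eta>"
    using 3 by simp
qed

lemma lie_formula:
  assumes aL: "\<And>a b \<eta>. \<Phi> (a + b) \<eta> = \<Phi> a \<eta> + \<Phi> b \<eta>" and sL: "\<And>h a \<eta>. \<Phi> (sB h a) \<eta> = h * \<Phi> a \<eta>"
    and aR: "\<And>a b \<xi>. \<Phi> \<xi> (a + b) = \<Phi> \<xi> a + \<Phi> \<xi> b" and sR: "\<And>h a \<xi>. \<Phi> \<xi> (sB h a) = h * \<Phi> \<xi> a"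
  shows "lie P mA x \<Phi> = (\<lambda>\<xi> \<eta>. aA x (\<Phi> \<xi> \<eta>) - \<Phi> (actL x \<xi>) \<eta> - \<Phi> \<xi> (adL x \<eta>))"
proof -
  define I where "I = (\<lambda>\<xi> \<eta>. aA x (\<Phi> \<xi> \<eta>) - \<Phi> (actL x \<xi>) \<eta> - \<Phi> \<xi> (adL x \<eta>))"
  obtain ys0 where ys0: "\<Phi> = tsum P ys0" using tsum_rep[OF aL sL aR sR] by blast
  have T: "I = tsum P (map (\<lambda>(y1,y2). (mA x y1, y2)) ys @ map (\<lambda>(y1,y2). (y1, brk mA x y2)) ys)"
    if "\<Phi> = tsum P ys" for ys
    unfolding I_def that by (rule ext, rule ext, rule tsumT[symmetric])
  have "lie P mA x \<Phi> = I" unfolding lie_def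
  proof (rule the_equality)
    show "\<forall>ys. \<Phi> = tsum P ys \<longrightarrow> I = tsum P (map (\<lambda>(y1,y2). (mA x y1, y2)) ys @ map (\<lambda>(y1,y2). (y1, brk mA x y2)) ys)"
      using T by blast
    show "\<Psi> = I" if "\<forall>ys. \<Phi> = tsum P ys \<longrightarrow> \<Psi> = tsum P (map (\<lambda>(y1,y2). (mA x y1, y2)) ys @ map (\<lambda>(y1,y2). (y1, brk mA x y2)) ys)" for \<Psi>
      using that[rule_format, OF ys0] T[OF ys0] by simp
  qed
  then show ?thesis unfolding I_def .
qed

lemma lieC: "lie P mA z (cob1 (flipP P) mB aB y) = (\<lambda>\<xi> \<eta>. aA z (cob1 (flipP P) mB aB y \<xi> \<eta>)
    - cob1 (flipP P) mB aB y (actL z \<xi>) \<eta> - cob1 (flipP P) mB aB y \<xi> (adL z \<eta>))"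
  by (rule lie_formula) (rule C_addL C_smL C_addR C_smR)+

lemma actL_sm: "actL (sA f y) \<xi> = sB f (actL y \<xi>)"
  by (rule nondegB) (simp add: actL_char aA_sm mA_smL algebra_simps)

lemma adL_sm: "adL (sA f y) \<eta> = sB f (adL y \<eta>) + sB (P y \<eta>) (diff P aA f)"
  by (rule nondegB) (simp add: adL_char dA_char brk_def mA_smL mA_Leib aA_sm algebra_simps)

end


lemma ring_aux:
  fixes c0 ax_c1 cyA cyD ay_cx cxA cxD f b q g c1 bg p axp axb k1 k2 :: "'r::comm_ring_1"
  assumes "c0 = ax_c1 - cyA - cyD - (ay_cx - cxA - cxD)"
    and "f * c0 + b * q + g * c1 + bg * p = f * ax_c1 + c1 * g + b * axp + p * axb - (f * cyA + (axb - k1) * p)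
       - (f * cyD + b * (axp - q)) - (f * ay_cx - f * cxA - (f * cxD + p * (bg - k2)))"
  shows "p * (k1 - k2) = 0"
proof -
  have "p * (k1 - k2) = (f * ax_c1 + c1 * g + b * axp + p * axb - (f * cyA + (axb - k1) * p)
       - (f * cyD + b * (axp - q)) - (f * ay_cx - f * cxA - (f * cxD + p * (bg - k2))))
       - (f * c0 + b * q + g * c1 + bg * p)"
    unfolding assms(1) by (simp add: algebra_simps)
  also have "\<dots> = 0" unfolding assms(2) by simp
  finally show ?thesis .
qed

context LSB begin

lemma Kpre: "P y \<eta> * (P (mA x (diff (flipP P) aB f)) \<xi> - P x (mB \<xi> (diff P aA f))) = 0"
proof -
  define C where "C = cob1 (flipP P) mB aB"
  define dA where "dA = diff P aA f"
  define dB where "dB = diff (flipP P) aB f"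
  have eq0: "C (brk mA x y) \<xi> \<eta> = lie P mA x (C y) \<xi> \<eta> - lie P mA y (C x) \<xi> \<eta>"
    unfolding C_def using comp[of x y] by simp
  have eq1: "C (brk mA x (sA f y)) \<xi> \<eta> = lie P mA x (C (sA f y)) \<xi> \<eta> - lie P mA (sA f y) (C x) \<xi> \<eta>"
    unfolding C_def using comp[of x "sA f y"] by simp
  have Lx: "lie P mA x (C y) \<xi> \<eta> = aA x (C y \<xi> \<eta>) - C y (actL x \<xi>) \<eta> - C y \<xi> (adL x \<eta>)"
    unfolding C_def lieC by simp
  have Ly: "lie P mA y (C x) \<xi> \<eta> = aA y (C x \<xi> \<eta>) - C x (actL y \<xi>) \<eta> - C x \<xi> (adL y \<eta>)"
    unfolding C_def lieC by simp
  have E1: "C (brk mA x (sA f y)) \<xi> \<eta> = f * C (brk mA x y) \<xi> \<eta> + aB \<xi> f * P (brk mA x y) \<eta>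
      + aA x f * C y \<xi> \<eta> + aB \<xi> (aA x f) * P y \<eta>"
    unfolding C_def brk_sm C_addY C_smY by simp
  have E2: "lie P mA x (C (sA f y)) \<xi> \<eta> = aA x (f * C y \<xi> \<eta> + aB \<xi> f * P y \<eta>)
      - (f * C y (actL x \<xi>) \<eta> + aB (actL x \<xi>) f * P y \<eta>)
      - (f * C y \<xi> (adL x \<eta>) + aB \<xi> f * P y (adL x \<eta>))"
    unfolding C_def lieC C_smY by simp
  have E3: "lie P mA (sA f y) (C x) \<xi> \<eta> = f * aA y (C x \<xi> \<eta>) - f * C x (actL y \<xi>) \<eta>
      - (f * C x \<xi> (adL y \<eta>) + P y \<eta> * C x \<xi> dA)"
    unfolding C_def dA_def lieC actL_sm adL_sm C_smL C_addR C_smR aA_sm by simp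
  have E4: "aA x (f * C y \<xi> \<eta> + aB \<xi> f * P y \<eta>) = f * aA x (C y \<xi> \<eta>) + C y \<xi> \<eta> * aA x f
      + aB \<xi> f * aA x (P y \<eta>) + P y \<eta> * aA x (aB \<xi> f)"
    by (simp add: aA_add aA_mult)
  have E5: "P y (adL x \<eta>) = aA x (P y \<eta>) - P (brk mA x y) \<eta>" by (rule adL_char)
  have E6: "aB (actL x \<xi>) f = aA x (aB \<xi> f) - P (mA x dB) \<xi>"
    using actL_char[of dB x \<xi>] dB_char[of f] unfolding dB_def by simp
  have E7: "C x \<xi> dA = aB \<xi> (aA x f) - P x (mB \<xi> dA)"
    unfolding C_def dA_def C_app dA_char ..
  show ?thesis unfolding dA_def[symmetric] dB_def[symmetric]
    by (rule ring_aux[OF eq0[unfolded Lx Ly] eq1[unfolded E1 E2 E3 E4 E5 E6 E7]])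
qed

lemma K: "P (mA x (diff (flipP P) aB f)) \<xi> = P x (mB \<xi> (diff P aA f))"
proof -
  define D where "D = (\<lambda>z. P (mA z (diff (flipP P) aB f)) \<xi> - P z (mB \<xi> (diff P aA f)))"
  have "D x = (\<Sum>(e,\<epsilon>)\<leftarrow>es. P x \<epsilon> * D e)"
    by (rule linA_rep) (simp_all add: D_def mA_addL mA_smL algebra_simps)
  also have "\<dots> = (\<Sum>(e,\<epsilon>)\<leftarrow>es. 0)"
    by (rule arg_cong[where f=sum_list], rule map_cong) (auto simp: D_def Kpre)
  also have "\<dots> = 0" by (induct es) auto
  finally show ?thesis unfolding D_def by simp
qed

end


theorem mainTheorem2:
  fixes smA :: "'r::{comm_ring_1,real_algebra_1} \<Rightarrow> 'a::ab_group_add \<Rightarrow> 'a"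
    and smB :: "'r \<Rightarrow> 'b::ab_group_add \<Rightarrow> 'b"
    and P :: "'a \<Rightarrow> 'b \<Rightarrow> 'r"
    and mulA :: "'a \<Rightarrow> 'a \<Rightarrow> 'a" and anA :: "'a \<Rightarrow> 'r \<Rightarrow> 'r"
    and mulB :: "'b \<Rightarrow> 'b \<Rightarrow> 'b" and anB :: "'b \<Rightarrow> 'r \<Rightarrow> 'r"
  assumes "left_symmetric_bialgebroid smA smB P mulA anA mulB anB"
  shows "\<forall>x \<xi> f.
     mulA x (diff (flipP P) anB f) =
       diff (flipP P) anB (anA x f) - contr (flipP P) (cob1 (flipP P) mulB anB x) (diff P anA f)
   \<and> mulB \<xi> (diff P anA f) =
       diff P anA (anB \<xi> f) - contr P (cob1 P mulA anA \<xi>) (diff (flipP P) anB f)"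
proof -
  from assms obtain es :: "('a \<times> 'b) list" where
    e1: "\<forall>y. y = (\<Sum>(e,\<epsilon>)\<leftarrow>es. smA (P y \<epsilon>) e)" and
    e2: "\<forall>\<xi>. \<xi> = (\<Sum>(e,\<epsilon>)\<leftarrow>es. smB (P e \<xi>) \<epsilon>)"
    unfolding left_symmetric_bialgebroid_def dual_pair_def by blast
  interpret L: LSB smA smB P mulA anA mulB anB es
    by (unfold_locales) (use assms e1 e2 in blast)+
  show ?thesis
  proof (intro allI conjI)
    fix x \<xi> f
    show "mulA x (diff (flipP P) anB f) =
       diff (flipP P) anB (anA x f) - contr (flipP P) (cob1 (flipP P) mulB anB x) (diff P anA f)"
    proof (rule L.nondegA)
      fix \<eta>
      have c: "P (contr (flipP P) (cob1 (flipP P) mulB anB x) (diff P anA f)) \<eta>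
          = cob1 (flipP P) mulB anB x \<eta> (diff P anA f)"
        by (rule L.contrB_char) (rule L.C_addL L.C_smL)+
      show "P (mulA x (diff (flipP P) anB f)) \<eta> =
         P (diff (flipP P) anB (anA x f) - contr (flipP P) (cob1 (flipP P) mulB anB x) (diff P anA f)) \<eta>"
        by (simp add: c L.C_app L.dB_char L.dA_char L.K)
    qed
    show "mulB \<xi> (diff P anA f) =
       diff P anA (anB \<xi> f) - contr P (cob1 P mulA anA \<xi>) (diff (flipP P) anB f)"
    proof (rule L.nondegB)
      fix z
      have c: "P z (contr P (cob1 P mulA anA \<xi>) (diff (flipP P) anB f))
          = cob1 P mulA anA \<xi> z (diff (flipP P) anB f)"
        by (rule L.contrA_char) (simp_all add: cob1_def L.aA_addL L.mA_addL L.aA_sm L.mA_smL algebra_simps)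
      show "P z (mulB \<xi> (diff P anA f)) =
         P z (diff P anA (anB \<xi> f) - contr P (cob1 P mulA anA \<xi>) (diff (flipP P) anB f))"
        unfolding L.P_diffR c by (simp add: cob1_def L.dB_char L.dA_char L.K)
    qed
  qed
qed

end
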